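(* Let $P$ be a probability distribution of a random variable $\xi$, $\mathcal X\subseteq\mathbb R^d$, $\lambda>0$. Assume: (i) for every $\xi$, $x\mapsto \ell(x;\xi)$ is $G$-Lipschitz continuous and $L$-smooth on $\mathcal X$; (ii) $\psi:\mathbb R\to[0,+\infty]$ is convex, $\psi(1)=0$, $\psi(t)=+\infty$ for $t<0$, and $\psi^*(t)=\sup_s(st-\psi(s))$ is $M$-smooth. Let $\widehat{\mathcal L}(x,\eta)=\mathbb E_{\xi\sim P}\big[\lambda\psi^*\big(\frac{\ell(x;\xi)-G\eta}{\lambda}\big)+G\eta\big]$. Then for any $(x,\eta)$ and $(x',\eta')$, $$\|\nabla\widehat{\mathcal L}(x,\eta)-\nabla\widehat{\mathcal L}(x',\eta')\|\le\Big(K+\frac LG\|\nabla\widehat{\mathcal L}(x,\eta)\|\Big)\|(x-x',\eta-\eta')\|,$$ where $K=L+2G^2\lambda^{-1}M$.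
   Context: Norms are Euclidean; gradients are with respect to $(x,\eta)\in\mathbb R^{d+1}$. *)

theory Defs
  imports "HOL-Analysis.Analysis" "HOL-Probability.Probability"
begin

definition convex_ereal_fun :: "(real \<Rightarrow> ereal) \<Rightarrow> bool" where
  "convex_ereal_fun f \<longleftrightarrow>
     (\<forall>s t a. 0 \<le> a \<and> a \<le> 1 \<longrightarrow>
        f (a * s + (1 - a) * t) \<le> ereal a * f s + ereal (1 - a) * f t)"

definition conj_fun :: "(real \<Rightarrow> ereal) \<Rightarrow> real \<Rightarrow> ereal" where
  "conj_fun \<psi> t = (SUP s. ereal (s * t) - \<psi> s)"

definition smooth_on :: "'a::real_inner set \<Rightarrow> ('a \<Rightarrow> real) \<Rightarrow> real \<Rightarrow> bool" where
  "smooth_on S f L \<longleftrightarrow>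
     (\<exists>g. (\<forall>x\<in>S. GDERIV f x :> g x) \<and>
          (\<forall>x\<in>S. \<forall>y\<in>S. norm (g x - g y) \<le> L * norm (x - y)))"

definition Lhat :: "'b measure \<Rightarrow> ('x \<Rightarrow> 'b \<Rightarrow> real) \<Rightarrow> (real \<Rightarrow> ereal) \<Rightarrow> real \<Rightarrow> real
                    \<Rightarrow> 'x \<times> real \<Rightarrow> real" where
  "Lhat P l \<psi> lam G = (\<lambda>(x, \<eta>). LINT \<xi>|P.
      lam * real_of_ereal (conj_fun \<psi> ((l x \<xi> - G * \<eta>) / lam)) + G * \<eta>)"

end

theory Submission
  imports Defs
begin



lemma taylor_bound:
  fixes f :: "'a::euclidean_space \<Rightarrow> real"
  assumes S: "convex S" and der: "\<And>w. w\<in>S \<Longrightarrow> GDERIV f w :> gr w"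
    and lipg: "\<And>w. w\<in>S \<Longrightarrow> norm (gr w - gr z) \<le> K * norm (w - z)"
    and z: "z\<in>S" and w: "w\<in>S" and K: "K \<ge> 0"
  shows "\<bar>f w - f z - (w - z) \<bullet> gr z\<bar> \<le> K * norm (w - z) * norm (w - z)"
proof -
  let ?T = "closed_segment z w"
  have sub: "?T \<subseteq> S" using S z w by (simp add: closed_segment_subset)
  have "norm (f w - f z - (w - z) \<bullet> gr z) \<le> norm (w - z) * (K * norm (w - z))"
  proof (rule differentiable_bound_linearization[where S = ?T and f' = "\<lambda>v k. k \<bullet> gr v"])
    show "z + t *\<^sub>R (w - z) \<in> ?T" if "t \<in> {0..1}" for t
      using that by (auto simp: in_segment algebra_simps intro!: exI[of _ t])
    show "(f has_derivative (\<lambda>k. k \<bullet> gr v)) (at v within ?T)" if "v \<in> ?T" for v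
      using der[of v] sub that by (auto simp: gderiv_def intro: has_derivative_at_withinI)
    show "onorm ((\<lambda>k. k \<bullet> gr v) - (\<lambda>k. k \<bullet> gr z)) \<le> K * norm (w - z)" if v: "v \<in> ?T" for v
      unfolding fun_diff_def
    proof (rule onorm_bound)
      show "0 \<le> K * norm (w - z)" using K by simp
      fix k
      have "norm (v - z) \<le> norm (w - z)" using v
        by (metis dist_commute dist_norm dist_in_closed_segment)
      have "norm (k \<bullet> gr v - k \<bullet> gr z) = norm (k \<bullet> (gr v - gr z))" by (simp add: inner_diff_right)
      also have "\<dots> \<le> norm k * norm (gr v - gr z)" by (simp add: Cauchy_Schwarz_ineq2)
      also have "\<dots> \<le> norm k * (K * norm (v - z))" using lipg[of v] v sub
        by (intro mult_left_mono) auto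
      also have "\<dots> \<le> norm k * (K * norm (w - z))"
        using \<open>norm (v - z) \<le> norm (w - z)\<close> K by (intro mult_left_mono) auto
      finally show "norm (k \<bullet> gr v - k \<bullet> gr z) \<le> K * norm (w - z) * norm k" by (simp add: ac_simps)
    qed
  qed simp
  then show ?thesis by (simp add: ac_simps)
qed



lemma gderiv_integral:
  fixes f :: "'a::euclidean_space \<Rightarrow> 'b \<Rightarrow> real" and gr :: "'b \<Rightarrow> 'a"
  assumes r: "r > 0"
  and meas: "\<And>w. w \<in> ball z r \<Longrightarrow> f w \<in> borel_measurable P"
  and int: "\<And>w. w \<in> ball z r \<Longrightarrow> integrable P (f w)"
  and quad: "\<And>w \<xi>. w \<in> ball z r \<Longrightarrow> \<xi> \<in> space P \<Longrightarrow>
      \<bar>f w \<xi> - f z \<xi> - (w - z) \<bullet> gr \<xi>\<bar> \<le> C \<xi> * norm (w - z) * norm (w - z)"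
  and Cint: "integrable P C"
  and Bint: "integrable P B"
  and bnd: "\<And>\<xi>. \<xi> \<in> space P \<Longrightarrow> norm (gr \<xi>) \<le> B \<xi>"
  shows "integrable P gr \<and> GDERIV (\<lambda>w. LINT \<xi>|P. f w \<xi>) z :> (LINT \<xi>|P. gr \<xi>)"
proof -
  have grm: "gr \<in> borel_measurable P"
  proof (rule borel_measurable_euclidean_space[THEN iffD2], intro ballI)
    fix i :: 'a assume i: "i \<in> Basis"
    define t where "t n = r / real (n + 2)" for n :: nat
    have tpos: "t n > 0" for n using r by (simp add: t_def)
    have tlt: "t n < r" for n using r by (simp add: t_def field_simps add_pos_nonneg)
    have tball: "z + t n *\<^sub>R i \<in> ball z r" for n
      using tpos[of n] tlt[of n] i by (simp add: dist_norm)
    have t0: "t \<longlonglongrightarrow> 0" unfolding t_def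
      using LIMSEQ_ignore_initial_segment[OF lim_const_over_n[of r], of 2] by simp
    show "(\<lambda>\<xi>. gr \<xi> \<bullet> i) \<in> borel_measurable P"
    proof (rule borel_measurable_LIMSEQ_real[where u = "\<lambda>n \<xi>. (f (z + t n *\<^sub>R i) \<xi> - f z \<xi>) / t n"])
      show "(\<lambda>\<xi>. (f (z + t n *\<^sub>R i) \<xi> - f z \<xi>) / t n) \<in> borel_measurable P" for n
        using meas[OF tball[of n]] meas[of z] r
        by (intro borel_measurable_divide borel_measurable_diff) auto
      fix \<xi> assume \<xi>: "\<xi> \<in> space P"
      have "(\<lambda>n. (f (z + t n *\<^sub>R i) \<xi> - f z \<xi>) / t n - gr \<xi> \<bullet> i) \<longlonglongrightarrow> 0"
      proof (rule Lim_null_comparison)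
        show "\<forall>\<^sub>F n in sequentially. norm ((f (z + t n *\<^sub>R i) \<xi> - f z \<xi>) / t n - gr \<xi> \<bullet> i) \<le> C \<xi> * t n"
        proof (intro always_eventually allI)
          fix n
          have q: "\<bar>f (z + t n *\<^sub>R i) \<xi> - f z \<xi> - t n * (gr \<xi> \<bullet> i)\<bar> \<le> C \<xi> * t n * t n"
            using quad[OF tball[of n] \<xi>] tpos[of n] i by (simp add: inner_commute)
          have "(f (z + t n *\<^sub>R i) \<xi> - f z \<xi>) / t n - gr \<xi> \<bullet> i
               = (f (z + t n *\<^sub>R i) \<xi> - f z \<xi> - t n * (gr \<xi> \<bullet> i)) / t n"
            using tpos[of n] by (simp add: field_simps)
          also have "\<bar>\<dots>\<bar> \<le> C \<xi> * t n"
            using q tpos[of n] by (simp add: abs_div pos_divide_le_eq mult.assoc)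
          finally show "norm ((f (z + t n *\<^sub>R i) \<xi> - f z \<xi>) / t n - gr \<xi> \<bullet> i) \<le> C \<xi> * t n"
            by simp
        qed
        show "(\<lambda>n. C \<xi> * t n) \<longlonglongrightarrow> 0" using tendsto_mult_right_zero[OF t0] by simp
      qed
      then show "(\<lambda>n. (f (z + t n *\<^sub>R i) \<xi> - f z \<xi>) / t n) \<longlonglongrightarrow> gr \<xi> \<bullet> i"
        by (simp add: LIM_zero_iff)
    qed
  qed
  have gri: "integrable P gr"
  proof (rule Bochner_Integration.integrable_bound[OF Bint grm])
    show "AE x in P. norm (gr x) \<le> norm (B x)"
      by (rule AE_I2) (use bnd in \<open>fastforce intro: order_trans[OF _ abs_ge_self]\<close>)
  qed
  let ?G = "LINT \<xi>|P. gr \<xi>"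
  let ?IC = "\<bar>LINT \<xi>|P. C \<xi>\<bar>"
  have main: "\<bar>(LINT \<xi>|P. f w \<xi>) - (LINT \<xi>|P. f z \<xi>) - (w - z) \<bullet> ?G\<bar> \<le> ?IC * norm (w - z) * norm (w - z)"
    if w: "w \<in> ball z r" for w
  proof -
    have zb: "z \<in> ball z r" using r by simp
    have i1: "integrable P (\<lambda>\<xi>. f w \<xi> - f z \<xi> - (w - z) \<bullet> gr \<xi>)"
      by (intro Bochner_Integration.integrable_diff int[OF w] int[OF zb] integrable_inner_right gri)
    have "(LINT \<xi>|P. f w \<xi>) - (LINT \<xi>|P. f z \<xi>) - (w - z) \<bullet> ?G
        = (LINT \<xi>|P. f w \<xi> - f z \<xi> - (w - z) \<bullet> gr \<xi>)"
    proof -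
      have "(LINT \<xi>|P. f w \<xi> - f z \<xi> - (w - z) \<bullet> gr \<xi>) = (LINT \<xi>|P. f w \<xi> - f z \<xi>) - (LINT \<xi>|P. (w - z) \<bullet> gr \<xi>)"
        by (rule Bochner_Integration.integral_diff) (intro Bochner_Integration.integrable_diff int[OF w] int[OF zb], intro integrable_inner_right gri)
      also have "\<dots> = (LINT \<xi>|P. f w \<xi>) - (LINT \<xi>|P. f z \<xi>) - (LINT \<xi>|P. (w - z) \<bullet> gr \<xi>)"
        using Bochner_Integration.integral_diff[OF int[OF w] int[OF zb]] by simp
      also have "(LINT \<xi>|P. (w - z) \<bullet> gr \<xi>) = (w - z) \<bullet> ?G"
        by (rule integral_inner_right) (rule gri)
      finally show ?thesis by simp
    qed
    also have "\<bar>\<dots>\<bar> \<le> (LINT \<xi>|P. \<bar>f w \<xi> - f z \<xi> - (w - z) \<bullet> gr \<xi>\<bar>)"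
      using integral_norm_bound[of P "\<lambda>\<xi>. f w \<xi> - f z \<xi> - (w - z) \<bullet> gr \<xi>"] by simp
    also have "\<dots> \<le> (LINT \<xi>|P. C \<xi> * (norm (w - z) * norm (w - z)))"
      using i1 Cint quad[OF w] by (intro integral_mono) (auto simp: mult.assoc)
    also have "\<dots> = (LINT \<xi>|P. C \<xi>) * (norm (w - z) * norm (w - z))" by simp
    also have "\<dots> \<le> ?IC * (norm (w - z) * norm (w - z))"
      by (intro mult_right_mono) auto
    finally show ?thesis by (simp add: mult.assoc)
  qed
  have "((\<lambda>w. LINT \<xi>|P. f w \<xi>) has_derivative (\<lambda>h. h \<bullet> ?G)) (at z)"
    unfolding has_derivative_at_alt
  proof (intro conjI allI impI)
    show "bounded_linear (\<lambda>h. h \<bullet> ?G)" by (rule bounded_linear_inner_left)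
    fix e :: real assume e: "e > 0"
    define d where "d = min r (e / (?IC + 1))"
    have d: "d > 0" using r e by (simp add: d_def)
    show "\<exists>d>0. \<forall>y. norm (y - z) < d \<longrightarrow>
        norm ((LINT \<xi>|P. f y \<xi>) - (LINT \<xi>|P. f z \<xi>) - (y - z) \<bullet> ?G) \<le> e * norm (y - z)"
    proof (intro exI[of _ d] conjI allI impI d)
      fix y assume y: "norm (y - z) < d"
      then have yb: "y \<in> ball z r" by (simp add: d_def dist_norm norm_minus_commute)
      have IC0: "?IC \<ge> 0" by simp
      have "d \<le> e / (?IC + 1)" unfolding d_def by (rule min.cobounded2)
      hence yd: "norm (y - z) \<le> e / (?IC + 1)" using y by linarith
      have "?IC * norm (y - z) \<le> ?IC * (e / (?IC + 1))"
        using yd IC0 by (rule mult_left_mono)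
      also have "\<dots> = e * (?IC / (?IC + 1))" by simp
      also have "\<dots> \<le> e * 1"
        using e IC0 by (intro mult_left_mono) auto
      finally have "?IC * norm (y - z) \<le> e" by simp
      hence "?IC * norm (y - z) * norm (y - z) \<le> e * norm (y - z)"
        by (rule mult_right_mono) simp
      with main[OF yb] show "norm ((LINT \<xi>|P. f y \<xi>) - (LINT \<xi>|P. f z \<xi>) - (y - z) \<bullet> ?G) \<le> e * norm (y - z)"
        by simp
    qed
  qed
  then show ?thesis using gri by (simp add: gderiv_def)
qed



lemma grad_norm_le_lipschitz:
  fixes f :: "'a::euclidean_space \<Rightarrow> real"
  assumes X: "open X" and x: "x \<in> X" and lip: "G-lipschitz_on X f" and der: "GDERIV f x :> g"
  shows "norm g \<le> G"
proof (rule ccontr)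
  assume "\<not> norm g \<le> G"
  hence gG: "norm g > G" by simp
  have G0: "G \<ge> 0" using lip by (simp add: lipschitz_on_def)
  hence gnz: "g \<noteq> 0" using gG by auto
  define e where "e = (norm g - G) / 2"
  have e: "e > 0" using gG by (simp add: e_def)
  from der have "(f has_derivative (\<lambda>h. h \<bullet> g)) (at x)" by (simp add: gderiv_def)
  then obtain \<delta> where \<delta>: "\<delta> > 0" and H: "\<And>y. norm (y - x) < \<delta> \<Longrightarrow>
      norm (f y - f x - (y - x) \<bullet> g) \<le> e * norm (y - x)"
    unfolding has_derivative_at_alt using e by blast
  obtain \<epsilon> where \<epsilon>: "\<epsilon> > 0" "ball x \<epsilon> \<subseteq> X" using X x open_contains_ball by blast
  define t where "t = min \<delta> \<epsilon> / 2"
  have t: "t > 0" "t < \<delta>" "t < \<epsilon>" using \<delta> \<epsilon> by (auto simp: t_def)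
  define y where "y = x + (t / norm g) *\<^sub>R g"
  have ny: "norm (y - x) = t" using t gnz by (simp add: y_def)
  have yX: "y \<in> X" using \<epsilon> ny t by (auto simp: dist_norm norm_minus_commute)
  have ip: "(y - x) \<bullet> g = t * norm g" using gnz
    by (simp add: y_def power2_norm_eq_inner[symmetric] power2_eq_square)
  have "\<bar>f y - f x\<bar> \<le> G * t" using lip yX x ny
    by (auto simp: lipschitz_on_def dist_real_def dist_norm)
  moreover have "\<bar>f y - f x - t * norm g\<bar> \<le> e * t" using H[of y] ny t ip by simp
  ultimately have "t * norm g \<le> G * t + e * t" by linarith
  hence "t * norm g \<le> t * (G + e)" by (simp add: algebra_simps)
  hence "norm g \<le> G + e" using t(1) by (simp add: mult_le_cancel_left_pos)
  hence "norm g \<le> G + (norm g - G) / 2" by (simp add: e_def)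
  thus False using gG by (simp add: field_simps)
qed




lemma Egr_lemma:
  fixes g g' :: "'a::euclidean_space" and w w' :: "'a \<times> real"
    and dw dw' uw uw' l1 l2 G M L lam :: real
  assumes dl: "\<bar>dw - dw'\<bar> \<le> M * \<bar>uw - uw'\<bar>"
    and uw: "uw - uw' = ((l1 - G * snd w) - (l2 - G * snd w')) / lam"
    and lG: "\<bar>l1 - l2\<bar> \<le> G * norm (fst w - fst w')"
    and gg: "norm (g - g') \<le> L * norm (fst w - fst w')"
    and g'G: "norm g' \<le> G"
    and G0: "G \<ge> 0" and M0: "M \<ge> 0" and lam: "lam > 0"
  shows "norm ((dw *\<^sub>R g, G - G * dw) - (dw' *\<^sub>R g', G - G * dw'))
     \<le> L * norm (fst w - fst w') * \<bar>dw\<bar> + 2 * G^2 * M / lam * norm (w - w')"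
proof -
  define c where "c = 2 * G^2 * M / lam"
  define nx where "nx = norm (fst w - fst w')"
  define ne where "ne = \<bar>snd w - snd w'\<bar>"
  have split: "(dw *\<^sub>R g, G - G * dw) - (dw' *\<^sub>R g', G - G * dw') = (dw *\<^sub>R (g - g'), 0) + (dw - dw') *\<^sub>R (g', - G)"
    by (simp add: algebra_simps)
  have n1: "norm ((dw *\<^sub>R (g - g'), 0::real)) \<le> L * nx * \<bar>dw\<bar>"
  proof -
    have "norm ((dw *\<^sub>R (g - g'), 0::real)) = \<bar>dw\<bar> * norm (g - g')" by (simp add: norm_Pair)
    also have "\<dots> \<le> \<bar>dw\<bar> * (L * nx)"
      using gg unfolding nx_def by (rule mult_left_mono) simp
    finally show ?thesis by (simp add: ac_simps)
  qed
  have ng: "norm (g', - G) \<le> sqrt 2 * G"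
  proof -
    have "norm (g', - G) = sqrt ((norm g')^2 + G^2)" by (simp add: norm_Pair)
    also have "\<dots> \<le> sqrt (2 * G^2)"
      using g'G norm_ge_zero[of g'] by (intro real_sqrt_le_mono) (simp add: power_mono)
    also have "\<dots> = sqrt 2 * G" using G0 by (simp add: real_sqrt_mult)
    finally show ?thesis .
  qed
  have nw: "nx + ne \<le> sqrt 2 * norm (w - w')"
  proof -
    have "norm (w - w') = sqrt (nx^2 + ne^2)"
      by (cases w, cases w') (simp add: norm_Pair nx_def ne_def)
    moreover have "nx + ne \<le> sqrt (2 * (nx^2 + ne^2))"
    proof (rule real_le_rsqrt)
      have "(nx + ne)^2 + (nx - ne)^2 = 2 * (nx^2 + ne^2)" by (simp add: power2_eq_square algebra_simps)
      thus "(nx + ne)^2 \<le> 2 * (nx^2 + ne^2)" using zero_le_power2[of "nx - ne"] by linarith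
    qed
    moreover have "sqrt (2 * (nx^2 + ne^2)) = sqrt 2 * sqrt (nx^2 + ne^2)" by (rule real_sqrt_mult)
    ultimately show ?thesis by (simp only:)
  qed
  have du: "\<bar>dw - dw'\<bar> \<le> M / lam * (G * nx + G * ne)"
  proof -
    have e1: "(l1 - G * snd w) - (l2 - G * snd w') = (l1 - l2) - G * (snd w - snd w')"
      by (simp add: algebra_simps)
    have e2: "\<bar>G * (snd w - snd w')\<bar> = G * ne" using G0 by (simp add: abs_mult ne_def)
    have "\<bar>(l1 - l2) - G * (snd w - snd w')\<bar> \<le> \<bar>l1 - l2\<bar> + \<bar>G * (snd w - snd w')\<bar>"
      by (rule abs_triangle_ineq4)
    hence a: "\<bar>(l1 - G * snd w) - (l2 - G * snd w')\<bar> \<le> G * nx + G * ne"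
      using lG e2 unfolding e1 nx_def by linarith
    have "\<bar>uw - uw'\<bar> = \<bar>(l1 - G * snd w) - (l2 - G * snd w')\<bar> / lam"
      using lam by (simp add: uw abs_div)
    also have "\<dots> \<le> (G * nx + G * ne) / lam"
      using a lam by (intro divide_right_mono) auto
    finally have "M * \<bar>uw - uw'\<bar> \<le> M * ((G * nx + G * ne) / lam)"
      using M0 by (intro mult_left_mono)
    thus ?thesis using dl by simp
  qed
  have n2: "norm ((dw - dw') *\<^sub>R (g', - G)) \<le> c * norm (w - w')"
  proof -
    have "norm ((dw - dw') *\<^sub>R (g', - G)) = \<bar>dw - dw'\<bar> * norm (g', - G)" by (rule norm_scaleR)
    also have "\<dots> \<le> (M / lam * (G * nx + G * ne)) * (sqrt 2 * G)"
      using du ng by (intro mult_mono) auto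
    also have "\<dots> = (M / lam * G * G) * (sqrt 2 * (nx + ne))" by (simp add: algebra_simps)
    also have "\<dots> \<le> (M / lam * G * G) * (sqrt 2 * (sqrt 2 * norm (w - w')))"
      using nw M0 lam G0 by (intro mult_left_mono) auto
    also have "\<dots> = c * norm (w - w')" by (simp add: c_def power2_eq_square)
    finally show ?thesis .
  qed
  have "norm ((dw *\<^sub>R g, G - G * dw) - (dw' *\<^sub>R g', G - G * dw'))
      \<le> norm ((dw *\<^sub>R (g - g'), 0::real)) + norm ((dw - dw') *\<^sub>R (g', - G))"
    unfolding split by (rule norm_triangle_ineq)
  thus ?thesis using n1 n2 unfolding c_def nx_def by linarith
qed




theorem lemma3p4:
  fixes P :: "'b measure"
    and l :: "real^'d \<Rightarrow> 'b \<Rightarrow> real"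
    and X :: "(real^'d) set"
    and \<psi> :: "real \<Rightarrow> ereal"
    and lam G L M :: real
  assumes P: "prob_space P"
    and X: "open X"
    and lam: "lam > 0"
    and lip: "\<And>\<xi>. \<xi> \<in> space P \<Longrightarrow> G-lipschitz_on X (\<lambda>x. l x \<xi>)"
    and sm: "\<And>\<xi>. \<xi> \<in> space P \<Longrightarrow> smooth_on X (\<lambda>x. l x \<xi>) L"
    and meas: "\<And>x. x \<in> X \<Longrightarrow> (\<lambda>\<xi>. l x \<xi>) \<in> borel_measurable P"
    and psi_convex: "convex_ereal_fun \<psi>"
    and psi_nonneg: "\<And>s. \<psi> s \<ge> 0"
    and psi_one: "\<psi> 1 = 0"
    and psi_neg: "\<And>t. t < 0 \<Longrightarrow> \<psi> t = \<infinity>"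
    and conj_finite: "\<And>t. \<bar>conj_fun \<psi> t\<bar> \<noteq> \<infinity>"
    and conj_smooth: "smooth_on UNIV (\<lambda>t. real_of_ereal (conj_fun \<psi> t)) M"
    and integr: "\<And>x \<eta>. x \<in> X \<Longrightarrow>
        integrable P (\<lambda>\<xi>. real_of_ereal (conj_fun \<psi> ((l x \<xi> - G * \<eta>) / lam)))"
    and x: "x \<in> X" and x': "x' \<in> X"
  shows "\<exists>g g'. GDERIV (Lhat P l \<psi> lam G) (x, \<eta>) :> g
              \<and> GDERIV (Lhat P l \<psi> lam G) (x', \<eta>') :> g'
              \<and> norm (g - g') \<le> ((L + 2 * G^2 * M / lam) + L / G * norm g)
                                   * norm ((x, \<eta>) - (x', \<eta>'))"
proof -
  interpret P: prob_space P by (rule P)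
  define ps where "ps t = real_of_ereal (conj_fun \<psi> t)" for t
  from conj_smooth obtain d where dder: "\<And>t. GDERIV ps t :> d t"
    and dlip: "\<And>s t. norm (d s - d t) \<le> M * norm (s - t)"
    unfolding smooth_on_def ps_def[abs_def] by blast
  have dder': "(ps has_real_derivative d t) (at t)" for t using dder[of t] by simp
  have M0: "M \<ge> 0" using dlip[of 1 0] norm_ge_zero[of "d 1 - d 0"] by simp
  have dcont: "continuous_on UNIV d"
    by (rule lipschitz_on_continuous_on[of M]) (use dlip M0 in \<open>auto simp: lipschitz_on_def dist_norm\<close>)
  have pscont: "continuous_on UNIV ps"
    using dder' by (intro continuous_at_imp_continuous_on) (auto intro: DERIV_isCont)
  have psmono: "ps s \<le> ps t" if st: "s \<le> t" for s t
  proof -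
    have "conj_fun \<psi> s \<le> conj_fun \<psi> t"
      unfolding conj_fun_def
    proof (rule SUP_mono, intro bexI[of _ _] UNIV_I)
      fix a
      show "ereal (a * s) - \<psi> a \<le> ereal (a * t) - \<psi> a"
      proof (cases "a < 0")
        case True thus ?thesis using psi_neg[OF True] by simp
      next
        case False
        hence "a * s \<le> a * t" using st by (simp add: mult_left_mono)
        thus ?thesis using psi_nonneg[of a] by (cases "\<psi> a") auto
      qed
    qed
    moreover obtain a where a: "conj_fun \<psi> s = ereal a"
      using conj_finite[of s] by (cases "conj_fun \<psi> s") auto
    moreover obtain b where b: "conj_fun \<psi> t = ereal b"
      using conj_finite[of t] by (cases "conj_fun \<psi> t") auto
    ultimately show ?thesis unfolding ps_def by simp
  qed
  have dnn: "d t \<ge> 0" for t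
  proof (rule ccontr)
    assume "\<not> d t \<ge> 0"
    then obtain \<delta> where \<delta>: "\<delta> > 0" "\<And>h. h > 0 \<Longrightarrow> h < \<delta> \<Longrightarrow> ps t > ps (t + h)"
      using DERIV_neg_dec_right[OF dder'[of t]] by force
    hence "ps t > ps (t + \<delta> / 2)" by simp
    thus False using psmono[of t "t + \<delta> / 2"] \<delta>(1) by simp
  qed
  have dbound: "\<bar>d t\<bar> \<le> \<bar>ps (t + 1) - ps t\<bar> + M" for t
  proof -
    have "\<bar>ps (t + 1) - ps t - (t + 1 - t) \<bullet> d t\<bar> \<le> M * norm (t + 1 - t) * norm (t + 1 - t)"
      by (rule taylor_bound[where S = UNIV]) (use dder dlip M0 in auto)
    thus ?thesis by simp
  qed
  obtain \<xi>0 where \<xi>0: "\<xi>0 \<in> space P" using P.not_empty by blast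
  have G0: "G \<ge> 0" using lip[OF \<xi>0] by (simp add: lipschitz_on_def)
  define gl where "gl \<xi> = (SOME g. (\<forall>x\<in>X. GDERIV (\<lambda>x. l x \<xi>) x :> g x) \<and>
          (\<forall>x\<in>X. \<forall>y\<in>X. norm (g x - g y) \<le> L * norm (x - y)))" for \<xi>
  have gl: "(\<forall>x\<in>X. GDERIV (\<lambda>x. l x \<xi>) x :> gl \<xi> x) \<and>
          (\<forall>x\<in>X. \<forall>y\<in>X. norm (gl \<xi> x - gl \<xi> y) \<le> L * norm (x - y))" if "\<xi> \<in> space P" for \<xi>
    unfolding gl_def using sm[OF that] unfolding smooth_on_def by (rule someI_ex)
  have glG: "norm (gl \<xi> y) \<le> G" if "\<xi> \<in> space P" "y \<in> X" for \<xi> y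
    using grad_norm_le_lipschitz[OF X that(2) lip[OF that(1)]] gl[OF that(1)] that(2) by blast
  have lG: "\<bar>l a \<xi> - l b \<xi>\<bar> \<le> G * norm (a - b)" if "\<xi> \<in> space P" "a \<in> X" "b \<in> X" for \<xi> a b
    using lip[OF that(1)] that(2,3) by (auto simp: lipschitz_on_def dist_real_def dist_norm)
  have L0: "L \<ge> 0"
  proof -
    obtain e where e: "e > 0" "ball x e \<subseteq> X" using X x open_contains_ball by blast
    obtain b :: "real^'d" where b: "b \<in> Basis" using nonempty_Basis by blast
    define y where "y = x + (e / 2) *\<^sub>R b"
    have ny: "norm (x - y) = e / 2" using b e by (simp add: y_def)
    have "y \<in> X" using e ny by (auto simp: dist_norm)
    hence "norm (gl \<xi>0 x - gl \<xi>0 y) \<le> L * (e / 2)" using gl[OF \<xi>0] x ny by metis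
    hence "0 \<le> L * (e / 2)" by (rule order_trans[OF norm_ge_zero])
    thus ?thesis using e by (simp add: zero_le_mult_iff)
  qed
  show ?thesis
  proof (cases "G = 0")
    case True
    have lconst: "l a \<xi> = l b \<xi>" if "\<xi> \<in> space P" "a \<in> X" "b \<in> X" for \<xi> a b
      using lG[OF that] True by simp
    have Lc: "Lhat P l \<psi> lam G w = Lhat P l \<psi> lam G (x, 0)" if "fst w \<in> X" for w
    proof -
      obtain a b where w: "w = (a, b)" by (cases w)
      have "Lhat P l \<psi> lam G w = (LINT \<xi>|P. lam * real_of_ereal (conj_fun \<psi> ((l a \<xi> - G * b) / lam)) + G * b)"
        by (simp add: Lhat_def w)
      also have "\<dots> = (LINT \<xi>|P. lam * real_of_ereal (conj_fun \<psi> ((l x \<xi> - G * 0) / lam)) + G * 0)"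
        using that x True by (intro Bochner_Integration.integral_cong refl) (simp add: w lconst[of _ a x])
      also have "\<dots> = Lhat P l \<psi> lam G (x, 0)" by (simp add: Lhat_def)
      finally show ?thesis .
    qed
    have D0: "GDERIV (Lhat P l \<psi> lam G) w :> 0" if "fst w \<in> X" for w
    proof -
      have "((\<lambda>_. Lhat P l \<psi> lam G (x, 0)) has_derivative (\<lambda>h. 0)) (at w)"
        by (rule has_derivative_const)
      hence "(Lhat P l \<psi> lam G has_derivative (\<lambda>h. 0)) (at w)"
      proof (rule has_derivative_transform_within_open)
        show "open (X \<times> (UNIV :: real set))" using X by (intro open_Times) auto
        show "w \<in> X \<times> UNIV" using that by (cases w) auto
        show "Lhat P l \<psi> lam G (x, 0) = Lhat P l \<psi> lam G v" if "v \<in> X \<times> UNIV" for v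
          using Lc[of v] that by (cases v) auto
      qed
      thus ?thesis by (simp add: gderiv_def)
    qed
    show ?thesis
      by (rule exI[of _ 0], rule exI[of _ 0]) (use D0[of "(x, \<eta>)"] D0[of "(x', \<eta>')"] x x' True L0 in auto)
  next
    case False
    hence Gp: "G > 0" using G0 by simp
    define u where "u w \<xi> = (l (fst w) \<xi> - G * snd w) / lam" for w :: "(real^'d) \<times> real" and \<xi>
    define f where "f w \<xi> = lam * ps (u w \<xi>) + G * snd w" for w :: "(real^'d) \<times> real" and \<xi>
    define gr where "gr w \<xi> = (d (u w \<xi>) *\<^sub>R gl \<xi> (fst w), G - G * d (u w \<xi>))"
      for w :: "(real^'d) \<times> real" and \<xi>
    define c where "c = 2 * G^2 * M / lam"
    have c0: "c \<ge> 0" using M0 lam by (simp add: c_def)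
    have Fdef: "Lhat P l \<psi> lam G = (\<lambda>w. LINT \<xi>|P. f w \<xi>)"
      by (auto simp: Lhat_def f_def u_def ps_def fun_eq_iff split: prod.splits)
    have umeas: "(\<lambda>\<xi>. u w \<xi>) \<in> borel_measurable P" if "fst w \<in> X" for w
      unfolding u_def
      by (rule borel_measurable_divide[OF borel_measurable_diff[OF meas[OF that] borel_measurable_const] borel_measurable_const])
    have psu_meas: "(\<lambda>\<xi>. ps (u w \<xi>)) \<in> borel_measurable P" if "fst w \<in> X" for w
      by (rule borel_measurable_continuous_on[OF pscont umeas[OF that]])
    have du_meas: "(\<lambda>\<xi>. d (u w \<xi>)) \<in> borel_measurable P" if "fst w \<in> X" for w
      by (rule borel_measurable_continuous_on[OF dcont umeas[OF that]])
    have fmeas: "f w \<in> borel_measurable P" if "fst w \<in> X" for w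
    proof -
      have "(\<lambda>\<xi>. lam * ps (u w \<xi>) + G * snd w) \<in> borel_measurable P"
        by (rule borel_measurable_add[OF borel_measurable_times[OF borel_measurable_const psu_meas[OF that]] borel_measurable_const])
      thus ?thesis unfolding f_def .
    qed
    have psu_int: "integrable P (\<lambda>\<xi>. ps (u w \<xi>))" if "fst w \<in> X" for w
      using integr[OF that, of "snd w"] by (simp add: u_def ps_def)
    have fint: "integrable P (f w)" if "fst w \<in> X" for w
    proof -
      have "integrable P (\<lambda>\<xi>. lam * ps (u w \<xi>) + G * snd w)"
        by (rule Bochner_Integration.integrable_add[OF integrable_mult_right[OF psu_int[OF that]] P.integrable_const])
      thus ?thesis unfolding f_def .
    qed
    have dint: "integrable P (\<lambda>\<xi>. \<bar>d (u w \<xi>)\<bar>)" if w: "fst w \<in> X" for w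
    proof -
      define w' where "w' = (fst w, snd w - lam / G)"
      have w'X: "fst w' \<in> X" using w by (simp add: w'_def)
      have uw': "u w' \<xi> = u w \<xi> + 1" for \<xi>
        using lam Gp by (simp add: u_def w'_def field_simps)
      have "integrable P (\<lambda>\<xi>. \<bar>ps (u w' \<xi>) - ps (u w \<xi>)\<bar> + M)"
        by (intro Bochner_Integration.integrable_add integrable_abs Bochner_Integration.integrable_diff
              psu_int w w'X P.integrable_const)
      moreover have "(\<lambda>\<xi>. \<bar>d (u w \<xi>)\<bar>) \<in> borel_measurable P"
        by (rule borel_measurable_abs[OF du_meas[OF w]])
      ultimately show ?thesis
      proof (rule Bochner_Integration.integrable_bound)
        show "AE \<xi> in P. norm \<bar>d (u w \<xi>)\<bar> \<le> norm (\<bar>ps (u w' \<xi>) - ps (u w \<xi>)\<bar> + M)"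
        proof (rule AE_I2)
          fix \<xi>
          have "\<bar>d (u w \<xi>)\<bar> \<le> \<bar>ps (u w' \<xi>) - ps (u w \<xi>)\<bar> + M"
            using dbound[of "u w \<xi>"] by (simp add: uw')
          thus "norm \<bar>d (u w \<xi>)\<bar> \<le> norm (\<bar>ps (u w' \<xi>) - ps (u w \<xi>)\<bar> + M)"
            using M0 by simp
        qed
      qed
    qed
    have fder: "GDERIV (\<lambda>w. f w \<xi>) w :> gr w \<xi>" if \<xi>: "\<xi> \<in> space P" and w: "fst w \<in> X" for w \<xi>
    proof -
      have hl: "((\<lambda>x. l x \<xi>) has_derivative (\<lambda>h. h \<bullet> gl \<xi> (fst w))) (at (fst w))"
        using gl[OF \<xi>] w by (simp add: gderiv_def)
      have h1: "((\<lambda>w. l (fst w) \<xi>) has_derivative (\<lambda>h. fst h \<bullet> gl \<xi> (fst w))) (at w)"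
        using has_derivative_compose[OF has_derivative_fst[OF has_derivative_ident] hl] by simp
      have h2: "((\<lambda>w. G * snd w) has_derivative (\<lambda>h. G * snd h)) (at w)"
        by (rule has_derivative_mult_right[OF has_derivative_snd[OF has_derivative_ident]])
      have hu: "((\<lambda>w. u w \<xi>) has_derivative (\<lambda>h. (fst h \<bullet> gl \<xi> (fst w) - G * snd h) / lam)) (at w)"
        unfolding u_def
        by (rule bounded_linear.has_derivative[OF bounded_linear_divide has_derivative_diff[OF h1 h2]])
      have hp: "(ps has_derivative (*) (d (u w \<xi>))) (at (u w \<xi>))"
        using dder'[of "u w \<xi>"] by (simp add: has_field_derivative_def)
      have hc: "((\<lambda>w. ps (u w \<xi>)) has_derivative
          (\<lambda>h. d (u w \<xi>) * ((fst h \<bullet> gl \<xi> (fst w) - G * snd h) / lam))) (at w)"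
        using has_derivative_compose[OF hu hp] by simp
      have hf: "((\<lambda>w. lam * ps (u w \<xi>) + G * snd w) has_derivative
          (\<lambda>h. lam * (d (u w \<xi>) * ((fst h \<bullet> gl \<xi> (fst w) - G * snd h) / lam)) + G * snd h)) (at w)"
        by (rule has_derivative_add[OF has_derivative_mult_right[OF hc] h2])
      have eq: "(\<lambda>h. lam * (d (u w \<xi>) * ((fst h \<bullet> gl \<xi> (fst w) - G * snd h) / lam)) + G * snd h)
          = (\<lambda>h. h \<bullet> gr w \<xi>)"
      proof
        fix h :: "(real^'d) \<times> real"
        obtain h1 h2 where h: "h = (h1, h2)" by (cases h)
        show "lam * (d (u w \<xi>) * ((fst h \<bullet> gl \<xi> (fst w) - G * snd h) / lam)) + G * snd h = h \<bullet> gr w \<xi>"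
          using lam by (simp add: h gr_def field_simps inner_scaleR_right)
      qed
      show ?thesis unfolding gderiv_def f_def
        by (rule has_derivative_eq_rhs[OF hf eq])
    qed
    have Egr: "norm (gr w \<xi> - gr w' \<xi>) \<le> L * norm (fst w - fst w') * \<bar>d (u w \<xi>)\<bar> + c * norm (w - w')"
      if \<xi>: "\<xi> \<in> space P" and w: "fst w \<in> X" and w': "fst w' \<in> X" for w w' \<xi>
    proof -
      have dl: "\<bar>d (u w \<xi>) - d (u w' \<xi>)\<bar> \<le> M * \<bar>u w \<xi> - u w' \<xi>\<bar>"
        using dlip[of "u w \<xi>" "u w' \<xi>"] by (simp only: real_norm_def)
      have uw: "u w \<xi> - u w' \<xi> = ((l (fst w) \<xi> - G * snd w) - (l (fst w') \<xi> - G * snd w')) / lam"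
        by (simp only: u_def diff_divide_distrib)
      have gg: "norm (gl \<xi> (fst w) - gl \<xi> (fst w')) \<le> L * norm (fst w - fst w')"
        using gl[OF \<xi>] w w' by blast
      show ?thesis unfolding gr_def c_def
        by (rule Egr_lemma[OF dl uw lG[OF \<xi> w w'] gg glG[OF \<xi> w'] G0 M0 lam])
    qed
    have gr_norm: "norm (gr w \<xi>) \<le> 2 * G * \<bar>d (u w \<xi>)\<bar> + G"
      if \<xi>: "\<xi> \<in> space P" and w: "fst w \<in> X" for w \<xi>
    proof -
      have p: "norm (gr w \<xi>) \<le> norm (d (u w \<xi>) *\<^sub>R gl \<xi> (fst w)) + norm (G - G * d (u w \<xi>))"
        unfolding gr_def by (rule norm_Pair_le)
      have a: "norm (d (u w \<xi>) *\<^sub>R gl \<xi> (fst w)) \<le> \<bar>d (u w \<xi>)\<bar> * G"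
        using glG[OF \<xi> w] by (simp add: mult_left_mono)
      have gd: "G * d (u w \<xi>) \<ge> 0" by (rule mult_nonneg_nonneg[OF G0 dnn])
      have ad: "\<bar>d (u w \<xi>)\<bar> = d (u w \<xi>)" using dnn by simp
      have b: "norm (G - G * d (u w \<xi>)) \<le> G + G * d (u w \<xi>)"
        using gd G0 by (simp only: real_norm_def)
      have e: "d (u w \<xi>) * G = G * d (u w \<xi>)" "2 * G * d (u w \<xi>) = G * d (u w \<xi>) + G * d (u w \<xi>)"
        by (simp_all add: algebra_simps)
      show ?thesis using p a b ad e by (simp only:)
    qed
    have dabs: "\<bar>d t\<bar> = d t" for t using dnn[of t] by simp
    have dint': "integrable P (\<lambda>\<xi>. d (u w \<xi>))" if "fst w \<in> X" for w
      using dint[OF that] by (simp only: dabs)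
    have deriv: "integrable P (gr z) \<and> GDERIV (\<lambda>w. LINT \<xi>|P. f w \<xi>) z :> (LINT \<xi>|P. gr z \<xi>)"
      if z: "fst z \<in> X" for z
    proof -
      obtain r where r: "r > 0" "ball (fst z) r \<subseteq> X" using X z open_contains_ball by blast
      have ballX: "fst w \<in> X" if "w \<in> ball z r" for w
      proof -
        have "dist (fst z) (fst w) \<le> dist z w" by (rule dist_fst_le)
        thus ?thesis using that r(2) by auto
      qed
      have nfst: "norm (fst a - fst b) \<le> norm (a - b)" for a b :: "(real^'d) \<times> real"
        using dist_fst_le[of a b] by (simp add: dist_norm)
      define C where "C \<xi> = L * d (u z \<xi>) + c" for \<xi>
      define B where "B \<xi> = 2 * G * d (u z \<xi>) + G" for \<xi>
      show ?thesis
      proof (rule gderiv_integral[where r = r and C = C and B = B])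
        show "0 < r" by (rule r(1))
        show "f w \<in> borel_measurable P" if "w \<in> ball z r" for w by (rule fmeas[OF ballX[OF that]])
        show "integrable P (f w)" if "w \<in> ball z r" for w by (rule fint[OF ballX[OF that]])
        show "integrable P C" unfolding C_def
          by (rule Bochner_Integration.integrable_add[OF integrable_mult_right[OF dint'[OF z]] P.integrable_const])
        show "integrable P B" unfolding B_def
          by (rule Bochner_Integration.integrable_add[OF integrable_mult_right[OF dint'[OF z]] P.integrable_const])
        show "norm (gr z \<xi>) \<le> B \<xi>" if "\<xi> \<in> space P" for \<xi>
          using gr_norm[OF that z] unfolding B_def dabs .
        show "\<bar>f w \<xi> - f z \<xi> - (w - z) \<bullet> gr z \<xi>\<bar> \<le> C \<xi> * norm (w - z) * norm (w - z)"
          if w: "w \<in> ball z r" and \<xi>: "\<xi> \<in> space P" for w \<xi>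
        proof (rule taylor_bound[where S = "ball z r" and f = "\<lambda>w. f w \<xi>" and gr = "\<lambda>w. gr w \<xi>"])
          show "convex (ball z r)" by (rule convex_ball)
          show "GDERIV (\<lambda>w. f w \<xi>) v :> gr v \<xi>" if "v \<in> ball z r" for v
            by (rule fder[OF \<xi> ballX[OF that]])
          show "z \<in> ball z r" using r(1) by simp
          show "w \<in> ball z r" by (rule w)
          show "0 \<le> C \<xi>" unfolding C_def using L0 c0 dnn by simp
          show "norm (gr v \<xi> - gr z \<xi>) \<le> C \<xi> * norm (v - z)" if v: "v \<in> ball z r" for v
          proof -
            have "norm (gr v \<xi> - gr z \<xi>) = norm (gr z \<xi> - gr v \<xi>)" by (rule norm_minus_commute)
            also have "\<dots> \<le> L * norm (fst z - fst v) * \<bar>d (u z \<xi>)\<bar> + c * norm (z - v)"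
              by (rule Egr[OF \<xi> z ballX[OF v]])
            also have "\<dots> \<le> L * norm (z - v) * d (u z \<xi>) + c * norm (z - v)"
              using nfst[of z v] L0 dnn[of "u z \<xi>"] unfolding dabs
              by (intro add_mono mult_right_mono mult_left_mono order_refl) auto
            also have "\<dots> = C \<xi> * norm (v - z)"
              by (simp add: C_def algebra_simps norm_minus_commute)
            finally show ?thesis .
          qed
        qed
      qed
    qed
    define z where "z = (x, \<eta>)"
    define z' where "z' = (x', \<eta>')"
    have zX: "fst z \<in> X" "fst z' \<in> X" using x x' by (simp_all add: z_def z'_def)
    define g where "g = (LINT \<xi>|P. gr z \<xi>)"
    define g' where "g' = (LINT \<xi>|P. gr z' \<xi>)"
    have I: "integrable P (gr z)" and D: "GDERIV (\<lambda>w. LINT \<xi>|P. f w \<xi>) z :> g"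
      using deriv[OF zX(1)] by (simp_all add: g_def)
    have I': "integrable P (gr z')" and D': "GDERIV (\<lambda>w. LINT \<xi>|P. f w \<xi>) z' :> g'"
      using deriv[OF zX(2)] by (simp_all add: g'_def)
    define D0 where "D0 = (LINT \<xi>|P. d (u z \<xi>))"
    have D0nn: "D0 \<ge> 0" unfolding D0_def by (intro Bochner_Integration.integral_nonneg dnn)
    have sndg: "snd g = G - G * D0"
    proof -
      have "snd g = (LINT \<xi>|P. snd (gr z \<xi>))"
        unfolding g_def by (rule integral_bounded_linear[OF bounded_linear_snd I, symmetric])
      also have "\<dots> = (LINT \<xi>|P. G - G * d (u z \<xi>))" by (simp add: gr_def)
      also have "\<dots> = G - G * D0"
        using dint'[OF zX(1)] by (simp add: D0_def P.prob_space)
      finally show ?thesis .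
    qed
    have D0le: "D0 \<le> 1 + norm g / G"
    proof -
      have "\<bar>snd g\<bar> \<le> norm g" using norm_snd_le[of "snd g" "fst g"] by simp
      hence "G - G * D0 \<ge> - norm g" using sndg by linarith
      hence "G * D0 \<le> G * (1 + norm g / G)" using Gp by (simp add: algebra_simps)
      thus ?thesis using Gp by (simp add: mult_le_cancel_left_pos)
    qed
    have diffint: "g - g' = (LINT \<xi>|P. gr z \<xi> - gr z' \<xi>)"
      unfolding g_def g'_def by (rule Bochner_Integration.integral_diff[OF I I', symmetric])
    have nb: "norm (g - g') \<le> (L + c + L / G * norm g) * norm (z - z')"
    proof -
      have "norm (g - g') \<le> (LINT \<xi>|P. norm (gr z \<xi> - gr z' \<xi>))"
        unfolding diffint by (rule integral_norm_bound)
      also have "\<dots> \<le> (LINT \<xi>|P. L * norm (fst z - fst z') * d (u z \<xi>) + c * norm (z - z'))"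
      proof (rule integral_mono)
        show "integrable P (\<lambda>\<xi>. norm (gr z \<xi> - gr z' \<xi>))"
          by (intro integrable_norm Bochner_Integration.integrable_diff I I')
        show "integrable P (\<lambda>\<xi>. L * norm (fst z - fst z') * d (u z \<xi>) + c * norm (z - z'))"
          by (rule Bochner_Integration.integrable_add[OF integrable_mult_right[OF dint'[OF zX(1)]] P.integrable_const])
        show "norm (gr z \<xi> - gr z' \<xi>) \<le> L * norm (fst z - fst z') * d (u z \<xi>) + c * norm (z - z')"
          if "\<xi> \<in> space P" for \<xi>
          using Egr[OF that zX] unfolding dabs .
      qed
      also have "\<dots> = L * norm (fst z - fst z') * D0 + c * norm (z - z')"
        using dint'[OF zX(1)] by (simp add: D0_def P.prob_space)
      also have "\<dots> \<le> L * norm (z - z') * (1 + norm g / G) + c * norm (z - z')"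
      proof -
        have "norm (fst z - fst z') \<le> norm (z - z')"
          using dist_fst_le[of z z'] by (simp add: dist_norm)
        hence "L * norm (fst z - fst z') * D0 \<le> L * norm (z - z') * (1 + norm g / G)"
          using L0 D0nn D0le by (intro mult_mono mult_left_mono) auto
        thus ?thesis by simp
      qed
      also have "\<dots> = (L + c + L / G * norm g) * norm (z - z')"
        using Gp by (simp add: algebra_simps)
      finally show ?thesis .
    qed
    show ?thesis
    proof (intro exI conjI)
      show "GDERIV (Lhat P l \<psi> lam G) (x, \<eta>) :> g" using D by (simp add: Fdef z_def)
      show "GDERIV (Lhat P l \<psi> lam G) (x', \<eta>') :> g'" using D' by (simp add: Fdef z'_def)
      show "norm (g - g') \<le> ((L + 2 * G^2 * M / lam) + L / G * norm g) * norm ((x, \<eta>) - (x', \<eta>'))"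
        using nb by (simp add: c_def z_def z'_def)
    qed
  qed
qed


end
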